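(* Let $L>0$, let $a$ satisfy (H_a), $g\in L^2(0,L)$, and let $\phi$ satisfy (H_φ) with $\phi(0)=+\infty$. Assume there is $M>0$ with $g(x)\ge -M$ for a.e. $x\in(0,L)$. Then problem (P) has no weak solution.
   Context: (H_a): $a\in L^\infty(0,L)$ and there are constants $0<\alpha<\beta$ with $\alpha\le a(x)\le\beta$ for a.e. $x\in(0,L)$. (H_φ): $\phi:\mathbb{R}\to\mathbb{R}\cup\{+\infty\}$ is continuous when $\mathbb{R}\cup\{+\infty\}$ carries its usual topology (neighbourhoods of $+\infty$ contain some $(M,+\infty]$), and $\phi(s)<+\infty$ for every $s\neq 0$. A weak solution of problem (P) with data $(a,g,\phi)$ is a function $u$ with $u\in H^1_0(0,L)$, $\phi(u)\in L^2(0,L)$, and $-\frac{d}{dx}(a\frac{du}{dx})=-\frac{d\phi(u)}{dx}-\frac{dg}{dx}$ in $\mathcal D'(0,L)$. *)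

theory Defs
  imports "HOL-Analysis.Analysis"
begin

definition L2_on :: "real \<Rightarrow> (real \<Rightarrow> real) \<Rightarrow> bool" where
  "L2_on L f \<longleftrightarrow> set_borel_measurable lborel {0<..<L} f
     \<and> set_integrable lborel {0<..<L} (\<lambda>x. (f x)^2)"

definition test_fun :: "real \<Rightarrow> (real \<Rightarrow> real) \<Rightarrow> bool" where
  "test_fun L \<psi> \<longleftrightarrow> (\<forall>n x. (deriv ^^ n) \<psi> differentiable (at x))
     \<and> (\<exists>\<delta>>0. \<forall>x. \<psi> x \<noteq> 0 \<longrightarrow> x \<in> {\<delta>..L-\<delta>})"

definition weak_deriv_on :: "real \<Rightarrow> (real \<Rightarrow> real) \<Rightarrow> (real \<Rightarrow> real) \<Rightarrow> bool" where
  "weak_deriv_on L u v \<longleftrightarrow> (\<forall>\<psi>. test_fun L \<psi> \<longrightarrow>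
     (LINT x:{0<..<L}|lborel. u x * deriv \<psi> x) = - (LINT x:{0<..<L}|lborel. v x * \<psi> x))"

definition H1_on :: "real \<Rightarrow> (real \<Rightarrow> real) \<Rightarrow> bool" where
  "H1_on L u \<longleftrightarrow> L2_on L u \<and> (\<exists>v. L2_on L v \<and> weak_deriv_on L u v)"

text \<open>H^1_0(0,L): H^1 functions with zero trace, i.e. whose continuous representative
  on [0,L] vanishes at both endpoints.\<close>
definition H1_0_on :: "real \<Rightarrow> (real \<Rightarrow> real) \<Rightarrow> bool" where
  "H1_0_on L u \<longleftrightarrow> H1_on L u \<and>
     (\<exists>w. continuous_on {0..L} w \<and> w 0 = 0 \<and> w L = 0 \<and>
          (AE x in lborel. x \<in> {0<..<L} \<longrightarrow> u x = w x))"

definition phi_comp_L2 :: "real \<Rightarrow> (real \<Rightarrow> ereal) \<Rightarrow> (real \<Rightarrow> real) \<Rightarrow> bool" where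
  "phi_comp_L2 L \<phi> u \<longleftrightarrow> (AE x in lborel. x \<in> {0<..<L} \<longrightarrow> \<phi> (u x) \<noteq> \<infinity>)
     \<and> L2_on L (\<lambda>x. real_of_ereal (\<phi> (u x)))"

text \<open>Weak solution of (P): u in H^1_0, phi(u) in L^2 and
  -(a u')' = -(phi(u))' - g' in D'(0,L), i.e. for every test function psi,
  int a u' psi' = int phi(u) psi' + int g psi'.\<close>
definition weak_solution ::
  "real \<Rightarrow> (real \<Rightarrow> real) \<Rightarrow> (real \<Rightarrow> real) \<Rightarrow> (real \<Rightarrow> ereal) \<Rightarrow> (real \<Rightarrow> real) \<Rightarrow> bool" where
  "weak_solution L a g \<phi> u \<longleftrightarrow> H1_0_on L u \<and> phi_comp_L2 L \<phi> u \<and>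
     (\<exists>v. L2_on L v \<and> weak_deriv_on L u v \<and>
       (\<forall>\<psi>. test_fun L \<psi> \<longrightarrow>
          (LINT x:{0<..<L}|lborel. a x * v x * deriv \<psi> x) =
          (LINT x:{0<..<L}|lborel. real_of_ereal (\<phi> (u x)) * deriv \<psi> x)
          + (LINT x:{0<..<L}|lborel. g x * deriv \<psi> x)))"

definition H_a :: "real \<Rightarrow> (real \<Rightarrow> real) \<Rightarrow> bool" where
  "H_a L a \<longleftrightarrow> set_borel_measurable lborel {0<..<L} a \<and>
     (\<exists>\<alpha> \<beta>. 0 < \<alpha> \<and> \<alpha> < \<beta> \<and>
        (AE x in lborel. x \<in> {0<..<L} \<longrightarrow> \<alpha> \<le> a x \<and> a x \<le> \<beta>))"

definition H_phi :: "(real \<Rightarrow> ereal) \<Rightarrow> bool" where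
  "H_phi \<phi> \<longleftrightarrow> (\<forall>s. \<phi> s \<noteq> -\<infinity>) \<and> continuous_on UNIV \<phi> \<and> (\<forall>s. s \<noteq> 0 \<longrightarrow> \<phi> s < \<infinity>)"

end

theory Submission
  imports Defs "HOL-Computational_Algebra.Polynomial" "HOL-Analysis.Radon_Nikodym"
begin
fun Cn :: "nat \<Rightarrow> (real \<Rightarrow> real) \<Rightarrow> bool" where
  "Cn 0 f \<longleftrightarrow> (\<forall>x. f differentiable (at x))"
| "Cn (Suc n) f \<longleftrightarrow> (\<forall>x. f differentiable (at x)) \<and> Cn n (deriv f)"

lemma Cn_iff: "Cn n f \<longleftrightarrow> (\<forall>m\<le>n. \<forall>x. (deriv^^m) f differentiable (at x))"
proof (induction n arbitrary: f)
  case 0 then show ?case by simp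
next
  case (Suc n)
  have "(\<forall>m\<le>Suc n. \<forall>x. (deriv^^m) f differentiable (at x)) \<longleftrightarrow>
        (\<forall>x. f differentiable (at x)) \<and> (\<forall>m\<le>n. \<forall>x. (deriv^^m) (deriv f) differentiable (at x))"
  proof safe
    fix m x assume H: "\<forall>m\<le>Suc n. \<forall>x. (deriv ^^ m) f differentiable at x" "m \<le> n"
    then show "(deriv ^^ m) (deriv f) differentiable at x"
      using H(1)[rule_format, of "Suc m" x] by (simp add: funpow_Suc_right del: funpow.simps)
  next
    fix x assume "\<forall>m\<le>Suc n. \<forall>x. (deriv ^^ m) f differentiable at x"
    then show "f differentiable at x" by (metis funpow_0 le0)
  next
    fix m x assume H: "\<forall>x. f differentiable at x" "\<forall>m\<le>n. \<forall>x. (deriv ^^ m) (deriv f) differentiable at x"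
      "m \<le> Suc n"
    show "(deriv ^^ m) f differentiable at x"
    proof (cases m)
      case 0 then show ?thesis using H by simp
    next
      case (Suc k) then show ?thesis using H(2)[rule_format, of k x] H(3)
        by (simp add: funpow_Suc_right del: funpow.simps)
    qed
  qed
  then show ?case using Suc.IH by simp
qed

lemma smooth_iff_Cn: "(\<forall>n x. (deriv^^n) f differentiable (at x)) \<longleftrightarrow> (\<forall>n. Cn n f)"
  by (auto simp: Cn_iff)

lemma Cn_diff: "Cn n f \<Longrightarrow> f differentiable (at x)"
  by (cases n) auto

lemma Cn_DERIV: "Cn n f \<Longrightarrow> (f has_real_derivative deriv f x) (at x)"
  using Cn_diff DERIV_deriv_iff_real_differentiable by blast

lemma Cn_Suc_mono: "Cn (Suc n) f \<Longrightarrow> Cn n f"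
  by (induction n arbitrary: f) auto

lemma deriv_eqI: "(\<And>x. (f has_real_derivative g x) (at x)) \<Longrightarrow> deriv f = g"
  by (rule ext) (rule DERIV_imp_deriv)

lemma Cn_add: "Cn n f \<Longrightarrow> Cn n g \<Longrightarrow> Cn n (\<lambda>x. f x + g x)"
proof (induction n arbitrary: f g)
  case 0 then show ?case by auto
next
  case (Suc n)
  have "deriv (\<lambda>x. f x + g x) = (\<lambda>x. deriv f x + deriv g x)"
    by (rule deriv_eqI, rule DERIV_add; rule Cn_DERIV[of "Suc n"]) (use Suc.prems in auto)
  then show ?case using Suc by auto
qed

lemma Cn_cmult: "Cn n f \<Longrightarrow> Cn n (\<lambda>x. c * f x)"
proof (induction n arbitrary: f)
  case 0 then show ?case by auto
next
  case (Suc n)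
  have "deriv (\<lambda>x. c * f x) = (\<lambda>x. c * deriv f x)"
    by (rule deriv_eqI, rule DERIV_cmult; rule Cn_DERIV[of "Suc n"]) (use Suc.prems in auto)
  then show ?case using Suc by auto
qed

lemma Cn_diff_fun: "Cn n f \<Longrightarrow> Cn n g \<Longrightarrow> Cn n (\<lambda>x. f x - g x)"
  using Cn_add[of n f "\<lambda>x. (-1) * g x"] Cn_cmult[of n g "-1"] by simp

lemma Cn_const: "Cn n (\<lambda>x. c)"
proof (induction n arbitrary: c)
  case 0 then show ?case by auto
next
  case (Suc n)
  have "deriv (\<lambda>x. c) = (\<lambda>x. 0)"
    by (rule deriv_eqI) auto
  then show ?case using Suc by auto
qed

lemma Cn_mult: "Cn n f \<Longrightarrow> Cn n g \<Longrightarrow> Cn n (\<lambda>x. f x * g x)"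
proof (induction n arbitrary: f g)
  case 0 then show ?case by auto
next
  case (Suc n)
  have "deriv (\<lambda>x. f x * g x) = (\<lambda>x. deriv f x * g x + f x * deriv g x)"
    apply (rule deriv_eqI)
    apply (rule DERIV_cong, rule DERIV_mult[OF Cn_DERIV[OF Suc.prems(1)] Cn_DERIV[OF Suc.prems(2)]])
    apply (simp add: algebra_simps)
    done
  moreover have "Cn n (\<lambda>x. deriv f x * g x + f x * deriv g x)"
    using Suc.prems by (intro Cn_add Suc.IH) (auto intro: Cn_Suc_mono)
  ultimately show ?case using Suc.prems by auto
qed

lemma Cn_inverse: "Cn n f \<Longrightarrow> (\<And>x. f x \<noteq> 0) \<Longrightarrow> Cn n (\<lambda>x. 1 / f x)"
proof (induction n arbitrary: f)
  case 0
  then show ?case by (auto intro!: differentiable_divide)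
next
  case (Suc n)
  have "deriv (\<lambda>x. 1 / f x) = (\<lambda>x. (- deriv f x) * ((1 / f x) * (1 / f x)))"
    apply (rule deriv_eqI)
    subgoal for x
    apply (rule DERIV_cong, rule DERIV_divide[OF DERIV_const Cn_DERIV[OF Suc.prems(1)] Suc.prems(2)])
    apply (simp add: divide_inverse power2_eq_square)
    done
    done
  moreover have "Cn n (\<lambda>x. (- deriv f x) * ((1 / f x) * (1 / f x)))"
    using Suc.prems Cn_cmult[of n "deriv f" "-1"]
    by (intro Cn_mult Suc.IH) (auto intro: Cn_Suc_mono)
  ultimately show ?case using Suc.prems by (auto intro!: differentiable_divide)
qed

lemma affine_DERIV: fixes f :: "real \<Rightarrow> real" shows "(\<forall>x. f differentiable (at x)) \<Longrightarrow>
   ((\<lambda>x. f (a * x + b)) has_real_derivative a * deriv f (a * x + b)) (at x)"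
proof -
  assume H: "\<forall>x. f differentiable (at x)"
  have d1: "(f has_real_derivative deriv f (a*x+b)) (at (a*x+b))"
    using H DERIV_deriv_iff_real_differentiable by blast
  have d2: "((\<lambda>x. a*x+b) has_real_derivative a) (at x)" by (auto intro!: derivative_eq_intros)
  have "((\<lambda>x. f (a * x + b)) has_real_derivative deriv f (a * x + b) * a) (at x)"
    by (rule DERIV_chain2[OF d1 d2])
  then show ?thesis by (simp add: mult.commute)
qed

lemma affine_diff: fixes f :: "real \<Rightarrow> real" shows "(\<forall>x. f differentiable (at x)) \<Longrightarrow> (\<lambda>x. f (a * x + b)) differentiable (at x)"
  using affine_DERIV[of f a b x] real_differentiable_def by blast

lemma Cn_affine: "Cn n f \<Longrightarrow> Cn n (\<lambda>x. f (a * x + b))"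
proof (induction n arbitrary: f)
  case 0
  then show ?case
    by (auto intro!: affine_diff)
next
  case (Suc n)
  have "deriv (\<lambda>x. f (a * x + b)) = (\<lambda>x. a * deriv f (a * x + b))"
    by (rule deriv_eqI, rule affine_DERIV) (use Suc.prems in auto)
  moreover have "Cn n (\<lambda>x. a * deriv f (a * x + b))"
    using Suc by (intro Cn_cmult) auto
  ultimately show ?case using Suc.prems
    by (auto intro!: affine_diff)
qed

lemma Cn_antideriv: "(\<And>x. (F has_real_derivative k x) (at x)) \<Longrightarrow> Cn n k \<Longrightarrow> Cn (Suc n) F"
  using deriv_eqI[of F k] by (auto simp: real_differentiable_def)

definition Gp :: "real poly \<Rightarrow> real \<Rightarrow> real" where
  "Gp P x = (if 0 < x then poly P (1/x) * exp (-1/x) else 0)"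

definition Qp :: "real poly \<Rightarrow> real poly" where
  "Qp P = [:0,0,1:] * (P - pderiv P)"

lemma poly_exp_lim: fixes Q :: "real poly" shows "((\<lambda>z. poly Q z / exp z) \<longlongrightarrow> 0) at_top"
proof -
  have "((\<lambda>z. \<Sum>i\<le>degree Q. coeff Q i * (z ^ i / exp z)) \<longlongrightarrow> (\<Sum>i\<le>degree Q. coeff Q i * 0)) at_top"
    by (intro tendsto_sum tendsto_mult tendsto_const tendsto_power_div_exp_0)
  then show ?thesis
    by (simp add: poly_altdef sum_divide_distrib)
qed

lemma Gp_DERIV: "(Gp P has_real_derivative Gp (Qp P) x) (at x)"
proof (cases "x > 0")
  case True
  have d1: "((\<lambda>y. poly P (1/y)) has_real_derivative poly (pderiv P) (1/x) * (- 1 / x^2)) (at x)"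
    by (rule DERIV_chain2[OF poly_DERIV]) (use True in \<open>auto intro!: derivative_eq_intros simp: power2_eq_square\<close>)
  have d2: "((\<lambda>y. exp (-1/y)) has_real_derivative exp (-1/x) * (1 / x^2)) (at x)"
    by (rule DERIV_chain2[OF DERIV_exp]) (use True in \<open>auto intro!: derivative_eq_intros simp: power2_eq_square\<close>)
  have d: "((\<lambda>y. poly P (1/y) * exp (-1/y)) has_real_derivative
       poly (pderiv P) (1/x) * (- 1 / x^2) * exp (-1/x) + exp (-1/x) * (1 / x^2) * poly P (1/x)) (at x)"
    by (rule DERIV_mult[OF d1 d2])
  have eq: "poly (pderiv P) (1/x) * (- 1 / x^2) * exp (-1/x) + exp (-1/x) * (1 / x^2) * poly P (1/x)
      = Gp (Qp P) x"
    using True by (simp add: Gp_def Qp_def algebra_simps power2_eq_square divide_simps)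
  show ?thesis
    by (rule has_field_derivative_transform_within_open[OF d[unfolded eq], of "{0<..}"])
       (use True in \<open>auto simp: Gp_def\<close>)
next
  case False
  show ?thesis
  proof (cases "x < 0")
    case True
    show ?thesis
      by (rule has_field_derivative_transform_within_open[of "\<lambda>_. 0" _ _ "{..<0}"])
         (use True in \<open>auto simp: Gp_def\<close>)
  next
    case False
    with \<open>\<not> x > 0\<close> have x0: "x = 0" by simp
    have "((\<lambda>y. (Gp P y - Gp P 0) / (y - 0)) \<longlongrightarrow> 0) (at 0)"
    proof (subst filterlim_at_split, intro conjI)
      show "((\<lambda>y. (Gp P y - Gp P 0) / (y - 0)) \<longlongrightarrow> 0) (at_left 0)"
        by (rule tendsto_eventually) (auto simp: Gp_def eventually_at_left_field intro: exI[of _ "-1"])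
    next
      have lim: "((\<lambda>z. poly ([:0,1:] * P) z / exp z) \<longlongrightarrow> 0) at_top" by (rule poly_exp_lim)
      have inv: "filterlim (\<lambda>y::real. inverse y) at_top (at_right 0)"
        by (rule filterlim_inverse_at_top_right)
      have "((\<lambda>y. poly ([:0,1:] * P) (inverse y) / exp (inverse y)) \<longlongrightarrow> 0) (at_right 0)"
        by (rule filterlim_compose[OF lim inv])
      moreover have "eventually (\<lambda>y. poly ([:0,1:] * P) (inverse y) / exp (inverse y) =
          (Gp P y - Gp P 0) / (y - 0)) (at_right 0)"
        unfolding eventually_at_right_field
        by (auto simp: Gp_def exp_minus field_simps intro!: exI[of _ 1])
      ultimately show "((\<lambda>y. (Gp P y - Gp P 0) / (y - 0)) \<longlongrightarrow> 0) (at_right 0)"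
        by (rule Lim_transform_eventually)
    qed
    then have "(Gp P has_real_derivative 0) (at 0)"
      by (simp add: has_field_derivative_iff)
    then show ?thesis using x0 by (simp add: Gp_def)
  qed
qed

lemma Cn_Gp: "Cn n (Gp P)"
proof (induction n arbitrary: P)
  case 0 then show ?case using Gp_DERIV real_differentiable_def by auto
next
  case (Suc n)
  have "deriv (Gp P) = Gp (Qp P)" by (rule deriv_eqI, rule Gp_DERIV)
  then show ?case using Suc Gp_DERIV real_differentiable_def by auto
qed

definition eb :: "real \<Rightarrow> real" where "eb x = (if 0 < x then exp (-1/x) else 0)"

lemma eb_Gp: "eb = Gp 1"
  by (auto simp: eb_def Gp_def)

lemma Cn_eb: "Cn n eb" by (simp add: eb_Gp Cn_Gp)

lemma eb_nonneg: "eb x \<ge> 0" by (simp add: eb_def)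
lemma eb_pos: "x > 0 \<Longrightarrow> eb x > 0" by (simp add: eb_def)
lemma eb_zero: "x \<le> 0 \<Longrightarrow> eb x = 0" by (simp add: eb_def)
lemma eb_mono: "x \<le> y \<Longrightarrow> eb x \<le> eb y"
  by (auto simp: eb_def frac_le)

definition Rs :: "real \<Rightarrow> real" where "Rs x = eb x * (1 / (eb x + eb (1 - x)))"
definition rho :: "real \<Rightarrow> real" where "rho = deriv Rs"

lemma eb_sum_pos: "eb x + eb (1 - x) > 0"
proof (cases "x > 0")
  case True then show ?thesis using eb_pos[of x] eb_nonneg[of "1-x"] by linarith
next
  case False then show ?thesis using eb_pos[of "1-x"] eb_nonneg[of x] by linarith
qed

lemma Cn_Rs: "Cn n Rs"
  unfolding Rs_def
  by (intro Cn_mult Cn_eb Cn_inverse Cn_add Cn_affine[of n eb "-1" 1, simplified])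
     (use eb_sum_pos in \<open>auto simp: less_le\<close>)

lemma Rs_zero: "x \<le> 0 \<Longrightarrow> Rs x = 0" by (simp add: Rs_def eb_zero)
lemma Rs_one: "x \<ge> 1 \<Longrightarrow> Rs x = 1"
  using eb_pos[of x] by (simp add: Rs_def eb_zero)
lemma Rs_nonneg: "Rs x \<ge> 0"
  using eb_sum_pos[of x] eb_nonneg[of x] by (simp add: Rs_def)
lemma Rs_le1: "Rs x \<le> 1"
  using eb_sum_pos[of x] eb_nonneg[of x] eb_nonneg[of "1-x"] by (simp add: Rs_def)
lemma Rs_mono: assumes "x \<le> y" shows "Rs x \<le> Rs y"
proof -
  have a: "eb x \<le> eb y" "eb (1-y) \<le> eb (1-x)" using assms by (auto intro: eb_mono)
  have "eb x * eb (1-y) \<le> eb y * eb (1-x)"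
    by (rule mult_mono) (use a eb_nonneg in auto)
  then have "eb x * (eb y + eb (1-y)) \<le> eb y * (eb x + eb (1-x))"
    by (simp add: algebra_simps)
  then show ?thesis using eb_sum_pos[of x] eb_sum_pos[of y]
    by (simp add: Rs_def divide_simps mult.commute)
qed

lemma Rs_DERIV: "(Rs has_real_derivative rho x) (at x)"
  unfolding rho_def using Cn_DERIV[OF Cn_Rs[of 0]] .

lemma Cn_rho: "Cn n rho"
  using Cn_Rs[of "Suc n"] by (simp add: rho_def)

lemma rho_cont: "continuous_on UNIV rho"
  using Cn_diff[OF Cn_rho[of 0]]
  by (meson continuous_at_imp_continuous_on differentiable_imp_continuous_within)

lemma rho_nonneg: "rho x \<ge> 0"
proof -
  have "((\<lambda>y. (Rs y - Rs x) / (y - x)) \<longlongrightarrow> rho x) (at x)"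
    using Rs_DERIV by (simp add: has_field_derivative_iff)
  moreover have "eventually (\<lambda>y. 0 \<le> (Rs y - Rs x) / (y - x)) (at x)"
  proof (rule always_eventually, rule allI)
    fix y
    show "0 \<le> (Rs y - Rs x) / (y - x)"
      using Rs_mono[of x y] Rs_mono[of y x]
      by (cases "x \<le> y") (auto intro: divide_nonneg_nonneg divide_nonpos_neg simp: divide_nonpos_nonpos)
  qed
  ultimately show ?thesis
    by (rule tendsto_lowerbound) simp
qed

lemma rho_zero: assumes "x \<le> 0 \<or> x \<ge> 1" shows "rho x = 0"
  using assms
proof
  assume "x \<le> 0"
  show ?thesis
    by (rule DERIV_local_min[OF Rs_DERIV, of 1]) (use \<open>x \<le> 0\<close> in \<open>auto simp: Rs_zero Rs_nonneg\<close>)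
next
  assume "x \<ge> 1"
  show ?thesis
    by (rule DERIV_local_max[OF Rs_DERIV, of 1]) (use \<open>x \<ge> 1\<close> in \<open>auto simp: Rs_one Rs_le1\<close>)
qed

definition psi :: "real \<Rightarrow> real \<Rightarrow> real \<Rightarrow> real \<Rightarrow> real" where
  "psi k s t z = Rs (k*(z-s) - 1) - Rs (k*(z-t) + 2)"

lemma Cn_Rs_aff: "Cn n (\<lambda>z. Rs (k*(z-s) + c))"
proof -
  have "(\<lambda>z. Rs (k*(z-s) + c)) = (\<lambda>z. Rs (k*z + (c - k * s)))"
    by (simp add: algebra_simps)
  then show ?thesis using Cn_affine[OF Cn_Rs] by simp
qed

lemma Cn_rho_aff: "Cn n (\<lambda>z. rho (k*(z-s) + c))"
proof -
  have "(\<lambda>z. rho (k*(z-s) + c)) = (\<lambda>z. rho (k*z + (c - k * s)))"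
    by (simp add: algebra_simps)
  then show ?thesis using Cn_affine[OF Cn_rho] by simp
qed

lemma Cn_psi: "Cn n (psi k s t)"
  unfolding psi_def using Cn_diff_fun[OF Cn_Rs_aff[of n k s "-1"] Cn_Rs_aff[of n k t 2]]
  by simp

lemma Rs_aff_DERIV: "((\<lambda>z. Rs (k*(z-s) + c)) has_real_derivative k * rho (k*(x-s) + c)) (at x)"
proof -
  have d2: "((\<lambda>z. k*(z-s) + c) has_real_derivative k) (at x)" by (auto intro!: derivative_eq_intros)
  show ?thesis using DERIV_chain2[OF Rs_DERIV d2] by (simp add: mult.commute)
qed

definition dpsi :: "real \<Rightarrow> real \<Rightarrow> real \<Rightarrow> real \<Rightarrow> real" where
  "dpsi k s t z = k * rho (k*(z-s) - 1) - k * rho (k*(z-t) + 2)"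

lemma psi_DERIV: "(psi k s t has_real_derivative dpsi k s t x) (at x)"
  unfolding psi_def dpsi_def
  using DERIV_diff[OF Rs_aff_DERIV[of k s "-1" x] Rs_aff_DERIV[of k t 2 x]] by simp

lemma deriv_psi: "deriv (psi k s t) = dpsi k s t"
  by (rule deriv_eqI, rule psi_DERIV)

lemma psi_support:
  assumes "k > 0" "k*(t-s) \<ge> 3" "psi k s t z \<noteq> 0"
  shows "s + 1/k < z \<and> z < t - 1/k"
proof (rule ccontr)
  assume "\<not> (s + 1/k < z \<and> z < t - 1/k)"
  then consider "z \<le> s + 1/k" | "z \<ge> t - 1/k" by linarith
  then show False
  proof cases
    case 1
    then have "k*(z-s) \<le> 1" using assms(1) by (simp add: field_simps)
    moreover have "k*(z-t) + 2 \<le> 0"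
    proof -
      have "k*(z-t) \<le> k*(s + 1/k - t)" using 1 assms(1) by (intro mult_left_mono) auto
      also have "\<dots> = k*(s-t) + 1" using assms(1) by (simp add: field_simps)
      finally show ?thesis using assms(2) by (simp add: algebra_simps)
    qed
    ultimately show False using assms(3) by (simp add: psi_def Rs_zero)
  next
    case 2
    then have "k*(z-t) \<ge> -1" using assms(1) by (simp add: field_simps)
    moreover have "k*(z-s) - 1 \<ge> 1"
    proof -
      have "k*(z-s) \<ge> k*(t - 1/k - s)" using 2 assms(1) by (intro mult_left_mono) auto
      moreover have "k*(t - 1/k - s) = k*(t-s) - 1" using assms(1) by (simp add: field_simps)
      ultimately show ?thesis using assms(2) by simp
    qed
    ultimately show False using assms(3) by (simp add: psi_def Rs_one)
  qed
qed

definition smooth_fun :: "(real \<Rightarrow> real) \<Rightarrow> bool" where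
  "smooth_fun f \<longleftrightarrow> (\<forall>n. Cn n f)"

lemma test_funI:
  assumes "smooth_fun f" "\<delta> > 0" "\<And>x. f x \<noteq> 0 \<Longrightarrow> x \<in> {\<delta>..L-\<delta>}"
  shows "test_fun L f"
  unfolding test_fun_def using assms by (auto simp: smooth_iff_Cn smooth_fun_def)

lemma test_fun_smooth: "test_fun L f \<Longrightarrow> smooth_fun f"
  unfolding test_fun_def smooth_fun_def by (simp add: smooth_iff_Cn)

lemma psi_test:
  assumes "0 \<le> s" "t \<le> L" "k > 0" "k*(t-s) \<ge> 3"
  shows "test_fun L (psi k s t)"
proof (rule test_funI[of _ "1/k"])
  show "smooth_fun (psi k s t)" by (simp add: smooth_fun_def Cn_psi)
  show "0 < 1/k" using assms by simp
  fix x assume "psi k s t x \<noteq> 0"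
  from psi_support[OF assms(3,4) this] assms show "x \<in> {1 / k..L - 1 / k}" by auto
qed

lemma psi_bound: "\<bar>psi k s t z\<bar> \<le> 1"
  using Rs_nonneg Rs_le1 unfolding psi_def abs_le_iff
  by (smt (verit))

lemma eventually_large: "c > 0 \<Longrightarrow> eventually (\<lambda>n. real n * c \<ge> b) sequentially"
proof -
  assume c: "c > 0"
  obtain N :: nat where N: "real N > b / c" using reals_Archimedean2 by blast
  show ?thesis unfolding eventually_sequentially
  proof (intro exI allI impI)
    fix n assume "N \<le> n"
    then have "real n * c \<ge> real N * c" using c by (intro mult_right_mono) auto
    moreover have "real N * c > b" using N c by (simp add: field_simps)
    ultimately show "real n * c \<ge> b" by simp
  qed
qed

lemma psi_lim:
  assumes "s < t"
  shows "(\<lambda>n. psi (real n) s t z) \<longlonglongrightarrow> indicator {s<..<t} z"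
proof (rule tendsto_eventually)
  consider "z \<le> s" | "s < z" "z < t" | "z \<ge> t" by linarith
  then show "eventually (\<lambda>n. psi (real n) s t z = indicator {s<..<t} z) sequentially"
  proof cases
    case 1
    have "eventually (\<lambda>n. real n * (t - z) \<ge> 2) sequentially"
      using 1 assms by (intro eventually_large) auto
    then show ?thesis
    proof eventually_elim
      case (elim n)
      have "real n * (z - s) \<le> 0" using 1 by (intro mult_nonneg_nonpos) auto
      then have a: "real n * (z - s) - 1 \<le> 0" by simp
      have b: "real n * (z - t) + 2 \<le> 0" using elim by (simp add: algebra_simps)
      show ?case using 1 a b by (simp add: psi_def Rs_zero)
    qed
  next
    case 2
    have "eventually (\<lambda>n. real n * (t - z) \<ge> 2 \<and> real n * (z - s) \<ge> 2) sequentially"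
      using 2 by (intro eventually_conj eventually_large) auto
    then show ?thesis
    proof eventually_elim
      case (elim n)
      have a: "real n * (z - s) - 1 \<ge> 1" using elim by simp
      have b: "real n * (z - t) + 2 \<le> 0" using elim by (simp add: algebra_simps)
      show ?case using 2 a b by (simp add: psi_def Rs_zero Rs_one)
    qed
  next
    case 3
    have "eventually (\<lambda>n. real n * (z - s) \<ge> 2) sequentially"
      using 3 assms by (intro eventually_large) auto
    then show ?thesis
    proof eventually_elim
      case (elim n)
      have a: "real n * (z - s) - 1 \<ge> 1" using elim by simp
      have "real n * (z - t) \<ge> 0" using 3 by (intro mult_nonneg_nonneg) auto
      then have b: "real n * (z - t) + 2 \<ge> 1" by simp
      show ?case using 3 a b by (simp add: psi_def Rs_one)
    qed
  qed
qed

lemma set_integrable_one: "set_integrable lborel {0<..<L::real} (\<lambda>x. 1::real)"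
proof -
  have "emeasure lborel {0<..<L} < \<infinity>"
    by (cases "0 \<le> L") auto
  then show ?thesis unfolding set_integrable_def by (simp add: integrable_real_indicator)
qed

lemma L2_int:
  assumes "L2_on L f" shows "set_integrable lborel {0<..<L} f"
proof -
  have m: "(\<lambda>x. indicator {0<..<L} x *\<^sub>R f x) \<in> borel_measurable lborel"
    using assms unfolding L2_on_def set_borel_measurable_def by simp
  have i1: "integrable lborel (\<lambda>x. indicator {0<..<L} x *\<^sub>R (1::real))"
    using set_integrable_one unfolding set_integrable_def .
  have i2: "integrable lborel (\<lambda>x. indicator {0<..<L} x *\<^sub>R (f x)^2)"
    using assms unfolding L2_on_def set_integrable_def by simp
  have "integrable lborel (\<lambda>x. indicator {0<..<L} x *\<^sub>R (1::real) + indicator {0<..<L} x *\<^sub>R (f x)^2)"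
    using i1 i2 by (rule Bochner_Integration.integrable_add)
  then show ?thesis unfolding set_integrable_def
  proof (rule Bochner_Integration.integrable_bound[OF _ m], intro AE_I2)
    fix x
    have "\<bar>f x\<bar> \<le> 1 + (f x)^2"
    proof (cases "\<bar>f x\<bar> \<le> 1")
      case True then show ?thesis using zero_le_power2[of "f x"] by linarith
    next
      case False
      then have "\<bar>f x\<bar> * 1 \<le> \<bar>f x\<bar> * \<bar>f x\<bar>" by (intro mult_left_mono) auto
      then show ?thesis by (simp add: power2_eq_square)
    qed
    then show "norm (indicator {0<..<L} x *\<^sub>R f x) \<le> norm (indicator {0<..<L} x *\<^sub>R (1::real) + indicator {0<..<L} x *\<^sub>R (f x)^2)"
      by (auto simp: indicator_def)
  qed
qed

lemma cont_bounded_on: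
  fixes h :: "real \<Rightarrow> real"
  assumes "continuous_on UNIV h"
  obtains B where "B \<ge> 0" "\<And>x. x \<in> {0..L} \<Longrightarrow> \<bar>h x\<bar> \<le> (B::real)"
proof -
  have "compact (h ` {0..L})"
    by (rule compact_continuous_image) (use assms continuous_on_subset in auto)
  then obtain B where B: "\<forall>y\<in>h ` {0..L}. norm y \<le> B" using compact_imp_bounded bounded_iff by metis
  show ?thesis
  proof (rule that[of "max B 0"])
    show "0 \<le> max B 0" by simp
    fix x assume "x \<in> {0..L}"
    then have "norm (h x) \<le> B" using B by blast
    then show "\<bar>h x\<bar> \<le> max B 0" by simp
  qed
qed

lemma int_mult_bounded:
  fixes f h :: "real \<Rightarrow> real"
  assumes f: "set_integrable lborel {0<..<L} f" and hm: "h \<in> borel_measurable borel"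
    and hb: "\<And>x. x \<in> {0<..<L} \<Longrightarrow> \<bar>h x\<bar> \<le> (B::real)"
  shows "set_integrable lborel {0<..<L} (\<lambda>x. f x * h x)"
proof -
  have fi: "integrable lborel (\<lambda>x. indicator {0<..<L} x *\<^sub>R f x)" using f unfolding set_integrable_def .
  have fm: "(\<lambda>x. indicator {0<..<L} x *\<^sub>R f x) \<in> borel_measurable lborel"
    using fi by (rule borel_measurable_integrable)
  have hm': "h \<in> borel_measurable lborel" using hm by simp
  have m: "(\<lambda>x. indicator {0<..<L} x *\<^sub>R (f x * h x)) \<in> borel_measurable lborel"
  proof -
    have "(\<lambda>x. (indicator {0<..<L} x *\<^sub>R f x) * h x) \<in> borel_measurable lborel"
      using fm hm' by measurable
    then show ?thesis by (simp add: mult.assoc)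
  qed
  have "integrable lborel (\<lambda>x. B * (indicator {0<..<L} x *\<^sub>R f x))"
    using fi by (rule integrable_mult_right)
  then show ?thesis unfolding set_integrable_def
  proof (rule Bochner_Integration.integrable_bound[OF _ m], intro AE_I2)
    fix x
    show "norm (indicator {0<..<L} x *\<^sub>R (f x * h x)) \<le> norm (B * (indicator {0<..<L} x *\<^sub>R f x))"
    proof (cases "x \<in> {0<..<L}")
      case True
      have "\<bar>f x * h x\<bar> \<le> \<bar>f x\<bar> * B" unfolding abs_mult
        by (rule mult_left_mono) (use hb True in auto)
      moreover have "B \<ge> 0" using hb[OF True] by linarith
      ultimately show ?thesis using True by (simp add: abs_mult mult.commute)
    qed simp
  qed
qed

lemma int_mult_cont:
  fixes f h :: "real \<Rightarrow> real"
  assumes f: "set_integrable lborel {0<..<L} f" and h: "continuous_on UNIV h"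
  shows "set_integrable lborel {0<..<L} (\<lambda>x. f x * h x)"
proof -
  obtain B where "B \<ge> 0" "\<And>x. x \<in> {0..L} \<Longrightarrow> \<bar>h x\<bar> \<le> (B::real)"
    using cont_bounded_on[OF h] by blast
  then show ?thesis
    by (intro int_mult_bounded[OF f borel_measurable_continuous_onI[OF h], of B]) auto
qed

lemma int_cont:
  fixes h :: "real \<Rightarrow> real"
  assumes h: "continuous_on UNIV h"
  shows "set_integrable lborel {0<..<L} h"
  using int_mult_cont[OF set_integrable_one h] by simp

lemma set_int_cong_AE:
  assumes "set_borel_measurable lborel A f" "set_borel_measurable lborel A g"
    "AE x in lborel. x \<in> A \<longrightarrow> f x = g x"
  shows "(LINT x:A|lborel. f x) = (LINT x:A|lborel. (g x::real))"
  unfolding set_lebesgue_integral_def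
  by (rule integral_cong_AE) (use assms in \<open>auto simp: set_borel_measurable_def\<close>)

lemma dct_I:
  fixes f H :: "real \<Rightarrow> real"
  assumes f: "set_integrable lborel {0<..<L} f"
    and hc: "\<And>n. continuous_on UNIV (h n)"
    and hb: "\<And>n z. \<bar>h n z\<bar> \<le> 1"
    and hl: "\<And>z. (\<lambda>n. h n z) \<longlonglongrightarrow> H z"
    and Hm: "H \<in> borel_measurable borel"
  shows "(\<lambda>n. LINT z:{0<..<L}|lborel. f z * h n z) \<longlonglongrightarrow> (LINT z:{0<..<L}|lborel. f z * H z)"
proof -
  have fi: "integrable lborel (\<lambda>x. indicator {0<..<L} x *\<^sub>R f x)" using f unfolding set_integrable_def .
  have fm: "(\<lambda>x. indicator {0<..<L} x *\<^sub>R f x) \<in> borel_measurable lborel"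
    using fi by (rule borel_measurable_integrable)
  have Hm': "H \<in> borel_measurable lborel" using Hm by simp
  have hm: "h n \<in> borel_measurable lborel" for n using borel_measurable_continuous_onI[OF hc[of n]] by simp
  show ?thesis unfolding set_lebesgue_integral_def
  proof (rule integral_dominated_convergence[where w="\<lambda>x. norm (indicator {0<..<L} x *\<^sub>R f x)"])
    have "(\<lambda>x. (indicator {0<..<L} x *\<^sub>R f x) * H x) \<in> borel_measurable lborel"
      using fm Hm' by measurable
    then show "(\<lambda>x. indicator {0<..<L} x *\<^sub>R (f x * H x)) \<in> borel_measurable lborel"
      by (simp add: mult.assoc)
    fix n
    have "(\<lambda>x. (indicator {0<..<L} x *\<^sub>R f x) * h n x) \<in> borel_measurable lborel"
      using fm hm[of n] by measurable
    then show "(\<lambda>x. indicator {0<..<L} x *\<^sub>R (f x * h n x)) \<in> borel_measurable lborel"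
      by (simp add: mult.assoc)
    show "AE x in lborel. norm (indicator {0<..<L} x *\<^sub>R (f x * h n x)) \<le> norm (indicator {0<..<L} x *\<^sub>R f x)"
    proof (rule AE_I2)
      fix x
      have "\<bar>f x * h n x\<bar> \<le> \<bar>f x\<bar> * 1" unfolding abs_mult by (rule mult_left_mono) (use hb in auto)
      then show "norm (indicator {0<..<L} x *\<^sub>R (f x * h n x)) \<le> norm (indicator {0<..<L} x *\<^sub>R f x)"
        by (auto simp: indicator_def)
    qed
  next
    show "integrable lborel (\<lambda>x. norm (indicator {0<..<L} x *\<^sub>R f x))"
      using fi by (rule integrable_norm)
    show "AE x in lborel. (\<lambda>n. indicator {0<..<L} x *\<^sub>R (f x * h n x)) \<longlonglongrightarrow> indicator {0<..<L} x *\<^sub>R (f x * H x)"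
      by (intro AE_I2 tendsto_scaleR tendsto_mult tendsto_const hl)
  qed
qed

lemma Cn_cont: "Cn n f \<Longrightarrow> continuous_on UNIV f"
  using Cn_diff by (meson continuous_at_imp_continuous_on differentiable_imp_continuous_within)

lemma rho_aff_cont: "continuous_on UNIV (\<lambda>z. k * rho (k*(z-p)+c))"
  by (rule Cn_cont[of 0]) (intro Cn_cmult Cn_rho_aff)

lemma rho_int_one:
  assumes "0 \<le> L" "k*(0-p)+c \<le> 0" "k*(L-p)+c \<ge> 1"
  shows "(LINT z:{0<..<L}|lborel. k * rho (k*(z-p)+c)) = 1"
proof -
  have "(LBINT z=ereal 0..ereal L. k * rho (k*(z-p)+c)) = Rs (k*(L-p)+c) - Rs (k*(0-p)+c)"
  proof (rule interval_integral_FTC_finite)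
    show "continuous_on {min 0 L..max 0 L} (\<lambda>z. k * rho (k * (z - p) + c))"
      using rho_aff_cont continuous_on_subset by blast
    fix x
    show "((\<lambda>z. Rs (k*(z-p)+c)) has_vector_derivative k * rho (k * (x - p) + c)) (at x within {min 0 L..max 0 L})"
      by (rule has_vector_derivative_at_within[OF Rs_aff_DERIV[of k p c x, unfolded has_real_derivative_iff_has_vector_derivative]])
  qed
  also have "\<dots> = 1" using assms by (simp add: Rs_one Rs_zero)
  finally show ?thesis using assms(1) by (simp add: interval_lebesgue_integral_def)
qed

lemma moll_lim:
  fixes W u :: "real \<Rightarrow> real"
  assumes W: "continuous_on UNIV W" and uW: "AE x in lborel. x \<in> {0<..<L} \<longrightarrow> u x = W x"
    and um: "set_borel_measurable lborel {0<..<L} u" and p: "0 < p" "p < L"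
  shows "(\<lambda>n. LINT z:{0<..<L}|lborel. u z * (real n * rho (real n * (z-p) + c))) \<longlonglongrightarrow> W p"
  unfolding tendsto_iff
proof (intro allI impI)
  fix e :: real assume e: "e > 0"
  have "isCont W p" using W by (simp add: continuous_on_eq_continuous_at)
  then obtain d where d: "d > 0" "\<And>z. dist z p < d \<Longrightarrow> dist (W z) (W p) < e/2"
    unfolding continuous_at_eps_delta using e by (meson half_gt_zero)
  define r where "r n z = real n * rho (real n * (z-p) + c)" for n z
  have rc: "continuous_on UNIV (r n)" for n unfolding r_def by (rule rho_aff_cont)
  have rm: "r n \<in> borel_measurable borel" for n using rc by (rule borel_measurable_continuous_onI)
  have Wm: "W \<in> borel_measurable borel" using W by (rule borel_measurable_continuous_onI)
  have "eventually (\<lambda>n. real n * p \<ge> \<bar>c\<bar> + 1 \<and> real n * (L - p) \<ge> \<bar>c\<bar> + 1 \<and> real n * d \<ge> \<bar>c\<bar> + 1) sequentially"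
    using p d by (intro eventually_conj eventually_large) auto
  then show "eventually (\<lambda>n. dist (LINT z:{0<..<L}|lborel. u z * (real n * rho (real n * (z-p) + c))) (W p) < e) sequentially"
  proof eventually_elim
    case (elim n)
    have np: "real n > 0" using elim p by (smt (verit) mult_nonpos_nonneg of_nat_0_le_iff)
    have int1: "(LINT z:{0<..<L}|lborel. r n z) = 1"
      unfolding r_def by (rule rho_int_one) (use elim p in \<open>auto simp: algebra_simps\<close>)
    have "(LINT z:{0<..<L}|lborel. u z * r n z) = (LINT z:{0<..<L}|lborel. W z * r n z)"
    proof (rule set_int_cong_AE)
      show "set_borel_measurable lborel {0<..<L} (\<lambda>z. u z * r n z)"
        using um rm[of n] unfolding set_borel_measurable_def
        by (simp add: mult.assoc[symmetric]) measurable
      show "set_borel_measurable lborel {0<..<L} (\<lambda>z. W z * r n z)"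
        using Wm rm[of n] unfolding set_borel_measurable_def by measurable
      show "AE x in lborel. x \<in> {0<..<L} \<longrightarrow> u x * r n x = W x * r n x"
        using uW by eventually_elim auto
    qed
    moreover have "(LINT z:{0<..<L}|lborel. W z * r n z) - W p = (LINT z:{0<..<L}|lborel. (W z - W p) * r n z)"
    proof -
      have i1: "set_integrable lborel {0<..<L} (\<lambda>z. W z * r n z)"
        by (rule int_cont) (intro continuous_on_mult W rc)
      have i2: "set_integrable lborel {0<..<L} (\<lambda>z. W p * r n z)"
        by (rule int_cont) (intro continuous_on_mult continuous_on_const rc)
      have "(LINT z:{0<..<L}|lborel. (W z - W p) * r n z) = (LINT z:{0<..<L}|lborel. W z * r n z - W p * r n z)"
        by (simp add: algebra_simps)
      also have "\<dots> = (LINT z:{0<..<L}|lborel. W z * r n z) - (LINT z:{0<..<L}|lborel. W p * r n z)"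
        by (rule set_integral_diff(2)[OF i1 i2])
      also have "\<dots> = (LINT z:{0<..<L}|lborel. W z * r n z) - W p"
        using int1 by simp
      finally show ?thesis by simp
    qed
    moreover have "\<bar>LINT z:{0<..<L}|lborel. (W z - W p) * r n z\<bar> \<le> e/2"
    proof -
      have bnd: "\<bar>(W z - W p) * r n z\<bar> \<le> e/2 * r n z" for z
      proof (cases "rho (real n * (z-p) + c) = 0")
        case True then show ?thesis by (simp add: r_def)
      next
        case False
        then have "0 < real n * (z-p) + c" "real n * (z-p) + c < 1"
          using rho_zero[of "real n * (z-p) + c"] by linarith+
        then have "\<bar>real n * (z - p)\<bar> < real n * d" using elim by linarith
        then have "\<bar>z - p\<bar> < d" using np by (simp add: abs_mult)
        then have "\<bar>W z - W p\<bar> < e/2" using d(2)[of z] by (simp add: dist_real_def)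
        moreover have "r n z \<ge> 0" unfolding r_def using np rho_nonneg by simp
        ultimately have "\<bar>W z - W p\<bar> * r n z \<le> e/2 * r n z" by (intro mult_right_mono) auto
        then show ?thesis using \<open>r n z \<ge> 0\<close> by (simp add: abs_mult)
      qed
      have iA: "set_integrable lborel {0<..<L} (\<lambda>z. (W z - W p) * r n z)"
        by (rule int_cont) (intro continuous_on_mult continuous_on_diff continuous_on_const W rc)
      have iB: "set_integrable lborel {0<..<L} (\<lambda>z. e/2 * r n z)"
        by (rule int_cont) (intro continuous_on_mult continuous_on_const rc)
      have iC: "set_integrable lborel {0<..<L} (\<lambda>z. (- (e/2)) * r n z)"
        by (rule int_cont) (intro continuous_on_mult continuous_on_const rc)
      have u1: "(LINT z:{0<..<L}|lborel. (W z - W p) * r n z) \<le> (LINT z:{0<..<L}|lborel. e/2 * r n z)"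
        by (rule set_integral_mono[OF iA iB]) (use bnd abs_le_iff in blast)
      have u2: "(LINT z:{0<..<L}|lborel. (- (e/2)) * r n z) \<le> (LINT z:{0<..<L}|lborel. (W z - W p) * r n z)"
      proof (rule set_integral_mono[OF iC iA])
        fix x
        have "- (e/2 * r n x) \<le> (W x - W p) * r n x" using bnd[of x] unfolding abs_le_iff by linarith
        then show "(- (e/2)) * r n x \<le> (W x - W p) * r n x" by simp
      qed
      have u3: "(LINT z:{0<..<L}|lborel. e/2 * r n z) = e/2"
        using int1 by (simp only: set_integral_mult_right)
      have u4: "(LINT z:{0<..<L}|lborel. (- (e/2)) * r n z) = - (e/2)"
        using int1 by (simp only: set_integral_mult_right)
      show ?thesis using u1 u2 u3 u4 unfolding abs_le_iff by linarith
    qed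
    ultimately show ?case using e unfolding r_def by (simp add: dist_real_def)
  qed
qed

lemma antideriv_DERIV:
  assumes kc: "continuous_on UNIV k"
  shows "((\<lambda>u. LBINT y=ereal 0..ereal u. k y) has_real_derivative k x) (at x)"
proof -
  have "((\<lambda>u. LBINT y=ereal 0..ereal u. k y) has_vector_derivative k x) (at x within {min x 0 - 1..max x 0 + 1})"
    by (rule interval_integral_FTC2) (use kc continuous_on_subset in auto)
  moreover have "at x within {min x 0 - 1..max x 0 + 1} = at x"
    by (rule at_within_interior) auto
  ultimately show ?thesis by (simp add: has_real_derivative_iff_has_vector_derivative)
qed

lemma antideriv_test:
  fixes k :: "real \<Rightarrow> real"
  assumes kc: "smooth_fun k" and d: "\<delta> > 0" and supp: "\<And>z. k z \<noteq> 0 \<Longrightarrow> z \<in> {\<delta>..L-\<delta>}"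
    and L: "L > 0" and int0: "(LINT z:{0<..<L}|lborel. k z) = 0"
  shows "test_fun L (\<lambda>u. LBINT y=ereal 0..ereal u. k y)" "deriv (\<lambda>u. LBINT y=ereal 0..ereal u. k y) = k"
proof -
  define chi where "chi = (\<lambda>u::real. LBINT y=ereal 0..ereal u. k y)"
  have kcont: "continuous_on UNIV k" using kc by (auto simp: smooth_fun_def intro: Cn_cont)
  have D: "(chi has_real_derivative k x) (at x)" for x
    unfolding chi_def by (rule antideriv_DERIV[OF kcont])
  then show "deriv (\<lambda>u. LBINT y=ereal 0..ereal u. k y) = k" unfolding chi_def by (rule deriv_eqI)
  have c1: "chi x = 0" if "x \<le> \<delta>/2" for x
  proof -
    have "\<exists>c. \<forall>x\<in>{..\<delta>/2}. chi x = c"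
    proof (rule has_field_derivative_zero_constant)
      fix x assume "x \<in> {..\<delta>/2}"
      then have "k x = 0" using supp[of x] d by force
      then show "(chi has_field_derivative 0) (at x within {..\<delta>/2})"
        using D[of x] by (simp add: has_field_derivative_at_within)
    qed simp
    then obtain c where "\<forall>x\<in>{..\<delta>/2}. chi x = c" by blast
    moreover have "chi 0 = 0" by (simp add: chi_def)
    ultimately show ?thesis using that d by force
  qed
  have c2: "chi x = 0" if "x \<ge> L - \<delta>/2" for x
  proof -
    have "\<exists>c. \<forall>x\<in>{L-\<delta>/2..}. chi x = c"
    proof (rule has_field_derivative_zero_constant)
      fix x assume "x \<in> {L-\<delta>/2..}"
      then have "k x = 0" using supp[of x] d by force
      then show "(chi has_field_derivative 0) (at x within {L-\<delta>/2..})"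
        using D[of x] by (simp add: has_field_derivative_at_within)
    qed simp
    then obtain c where "\<forall>x\<in>{L-\<delta>/2..}. chi x = c" by blast
    moreover have "chi L = 0" using int0 L by (simp add: chi_def interval_lebesgue_integral_def)
    ultimately show ?thesis using that d by force
  qed
  show "test_fun L (\<lambda>u. LBINT y=ereal 0..ereal u. k y)"
  proof (rule test_funI[of _ "\<delta>/2"])
    have "Cn (Suc n) chi" for n
      by (rule Cn_antideriv[OF D]) (use kc in \<open>simp add: smooth_fun_def\<close>)
    then show "smooth_fun (\<lambda>u. LBINT y=ereal 0..ereal u. k y)"
      unfolding smooth_fun_def chi_def[symmetric] using Cn_Suc_mono by blast
    show "0 < \<delta>/2" using d by simp
    fix x assume "(LBINT y=ereal 0..ereal x. k y) \<noteq> 0"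
    then have "chi x \<noteq> 0" by (simp add: chi_def)
    then have "\<not> x \<le> \<delta>/2" "\<not> x \<ge> L - \<delta>/2" using c1 c2 by blast+
    then show "x \<in> {\<delta>/2..L-\<delta>/2}" by simp
  qed
qed

lemma FL:
  fixes h :: "real \<Rightarrow> real"
  assumes L: "L > 0" and hi: "set_integrable lborel {0<..<L} h"
    and z: "\<And>s t. 0 \<le> s \<Longrightarrow> s < t \<Longrightarrow> t \<le> L \<Longrightarrow> (LINT z:{0<..<L}|lborel. h z * indicator {s<..<t} z) = 0"
  shows "AE x in lborel. x \<in> {0<..<L} \<longrightarrow> h x = 0"
proof -
  define H where "H x = indicator {0<..<L} x * h x" for x
  have Hi: "integrable lborel H" using hi unfolding set_integrable_def H_def by simp
  have Hm[measurable]: "H \<in> borel_measurable lborel" using Hi by (rule borel_measurable_integrable)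
  have key: "integral\<^sup>L lborel (\<lambda>x. H x * indicator {y<..} x) = 0" for y
  proof (cases "y < L")
    case True
    define s where "s = max y 0"
    have "(\<lambda>x. H x * indicator {y<..} x) = (\<lambda>x. indicator {0<..<L} x *\<^sub>R (h x * indicator {s<..<L} x))"
      by (auto simp: H_def s_def indicator_def fun_eq_iff)
    then have "integral\<^sup>L lborel (\<lambda>x. H x * indicator {y<..} x) = (LINT z:{0<..<L}|lborel. h z * indicator {s<..<L} z)"
      by (simp add: set_lebesgue_integral_def)
    also have "\<dots> = 0" by (rule z) (use True L in \<open>auto simp: s_def\<close>)
    finally show ?thesis .
  next
    case False
    then have "(\<lambda>x. H x * indicator {y<..} x) = (\<lambda>x. 0)"
      by (auto simp: H_def indicator_def fun_eq_iff)
    then show ?thesis by simp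
  qed
  define P where "P x = ennreal (max 0 (H x))" for x
  define N where "N x = ennreal (max 0 (- H x))" for x
  have Pm[measurable]: "P \<in> borel_measurable lborel" unfolding P_def by measurable
  have Nm[measurable]: "N \<in> borel_measurable lborel" unfolding N_def by measurable
  have ePN: "emeasure (density lborel P) {y<..} = ennreal (integral\<^sup>L lborel (\<lambda>x. max 0 (H x) * indicator {y<..} x))"
    "emeasure (density lborel N) {y<..} = ennreal (integral\<^sup>L lborel (\<lambda>x. max 0 (- H x) * indicator {y<..} x))"
    "integrable lborel (\<lambda>x. max 0 (H x) * indicator {y<..} x)"
    "integrable lborel (\<lambda>x. max 0 (- H x) * indicator {y<..} x)" for y
  proof -
    show i1: "integrable lborel (\<lambda>x. max 0 (H x) * indicator {y<..} x)"
      by (rule Bochner_Integration.integrable_bound[OF integrable_norm[OF Hi]]) (auto simp: indicator_def)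
    show i2: "integrable lborel (\<lambda>x. max 0 (- H x) * indicator {y<..} x)"
      by (rule Bochner_Integration.integrable_bound[OF integrable_norm[OF Hi]]) (auto simp: indicator_def)
    have "emeasure (density lborel P) {y<..} = (\<integral>\<^sup>+x. ennreal (max 0 (H x) * indicator {y<..} x) \<partial>lborel)"
      by (subst emeasure_density) (auto simp: P_def indicator_def intro!: nn_integral_cong)
    also have "\<dots> = ennreal (integral\<^sup>L lborel (\<lambda>x. max 0 (H x) * indicator {y<..} x))"
      by (rule nn_integral_eq_integral[OF i1]) auto
    finally show "emeasure (density lborel P) {y<..} = ennreal (integral\<^sup>L lborel (\<lambda>x. max 0 (H x) * indicator {y<..} x))" .
    have "emeasure (density lborel N) {y<..} = (\<integral>\<^sup>+x. ennreal (max 0 (- H x) * indicator {y<..} x) \<partial>lborel)"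
      by (subst emeasure_density) (auto simp: N_def indicator_def intro!: nn_integral_cong)
    also have "\<dots> = ennreal (integral\<^sup>L lborel (\<lambda>x. max 0 (- H x) * indicator {y<..} x))"
      by (rule nn_integral_eq_integral[OF i2]) auto
    finally show "emeasure (density lborel N) {y<..} = ennreal (integral\<^sup>L lborel (\<lambda>x. max 0 (- H x) * indicator {y<..} x))" .
  qed
  have "density lborel P = density lborel N"
  proof (rule measure_eqI_lessThan)
    show "sets (density lborel P) = sets borel" "sets (density lborel N) = sets borel" by auto
    fix y
    show "emeasure (density lborel P) {y<..} < \<infinity>" using ePN(1)[of y] by simp
    have "integral\<^sup>L lborel (\<lambda>x. max 0 (H x) * indicator {y<..} x) - integral\<^sup>L lborel (\<lambda>x. max 0 (- H x) * indicator {y<..} x)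
        = integral\<^sup>L lborel (\<lambda>x. max 0 (H x) * indicator {y<..} x - max 0 (- H x) * indicator {y<..} x)"
      by (rule Bochner_Integration.integral_diff[symmetric]) (use ePN in auto)
    also have "\<dots> = integral\<^sup>L lborel (\<lambda>x. H x * indicator {y<..} x)"
      by (rule Bochner_Integration.integral_cong) (auto simp: max_def indicator_def)
    also have "\<dots> = 0" by (rule key)
    finally show "emeasure (density lborel P) {y<..} = emeasure (density lborel N) {y<..}"
      using ePN(1,2)[of y] by simp
  qed
  then have "AE x in lborel. P x = N x"
    using sigma_finite_measure.density_unique_iff[OF sigma_finite_lborel Pm Nm] by simp
  then show ?thesis
  proof eventually_elim
    case (elim x)
    then have "max 0 (H x) = max 0 (- H x)" unfolding P_def N_def by (simp add: ennreal_inj)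
    then have "H x = 0" by (auto simp: max_def split: if_splits)
    then show ?case by (auto simp: H_def indicator_def)
  qed
qed

lemma no_pos:
  fixes W :: "real \<Rightarrow> real"
  assumes Wc: "continuous_on UNIV W" and WL: "W L = 0" and eta: "\<eta> > 0"
    and mono: "\<And>x y. 0 < x \<Longrightarrow> x < y \<Longrightarrow> y < L \<Longrightarrow> (\<forall>z\<in>{x..y}. \<bar>W z\<bar> < \<eta>) \<Longrightarrow> W x \<le> W y"
    and m: "0 < m" "m < L" "W m > 0"
  shows False
proof -
  define Zs where "Zs = {z \<in> {m..L}. W z \<le> (\<lambda>_. 0) z}"
  have "closed Zs" unfolding Zs_def
    by (rule continuous_on_closed_Collect_le) (use Wc continuous_on_subset in auto)
  moreover have "L \<in> Zs" using WL m by (simp add: Zs_def)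
  moreover have "bdd_below Zs" unfolding Zs_def by (rule bdd_belowI[of _ m]) auto
  ultimately have z0Z: "Inf Zs \<in> Zs" using closed_contains_Inf by blast
  define z0 where "z0 = Inf Zs"
  have z0: "m \<le> z0" "z0 \<le> L" "W z0 \<le> 0" using z0Z by (auto simp: Zs_def z0_def)
  then have mz0: "m < z0" using m by (cases "m = z0") auto
  have pos: "W z > 0" if "m \<le> z" "z < z0" for z
  proof (rule ccontr)
    assume "\<not> W z > 0"
    then have "z \<in> Zs" using that z0 by (auto simp: Zs_def)
    then have "z0 \<le> z" unfolding z0_def by (rule cInf_lower) fact
    then show False using that by simp
  qed
  have cz0: "isCont W z0" using Wc by (simp add: continuous_on_eq_continuous_at)
  obtain d1 where d1: "d1 > 0" "\<And>z. dist z z0 < d1 \<Longrightarrow> dist (W z) (W z0) < \<eta>/2"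
    using cz0 eta unfolding continuous_at_eps_delta by (meson half_gt_zero)
  define x where "x = max m (z0 - d1/2)"
  have x: "m \<le> x" "x < z0" "z0 - d1 < x" using mz0 d1 by (auto simp: x_def)
  have Wx: "W x > 0" using pos x by simp
  obtain d2 where d2: "d2 > 0" "\<And>z. dist z z0 < d2 \<Longrightarrow> dist (W z) (W z0) < W x"
    using cz0 Wx unfolding continuous_at_eps_delta by blast
  define mu where "mu = min (z0 - x) d2"
  define y where "y = z0 - mu / 2"
  have "0 < mu" "mu \<le> z0 - x" "mu \<le> d2" using x d2 by (auto simp: mu_def)
  then have y: "x < y" "y < z0" "z0 - y < d2" unfolding y_def by linarith+
  have "W y < W z0 + W x" using d2(2)[of y] y by (simp add: dist_real_def abs_less_iff)
  then have Wy: "W y < W x" using z0 by simp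
  have "W x \<le> W y"
  proof (rule mono)
    show "0 < x" using x m by simp
    show "x < y" by fact
    show "y < L" using y z0 by simp
    show "\<forall>z\<in>{x..y}. \<bar>W z\<bar> < \<eta>"
    proof
      fix z assume z: "z \<in> {x..y}"
      have "W z > 0" using z x y by (intro pos) auto
      moreover have "dist z z0 < d1" using z x y by (auto simp: dist_real_def)
      then have "\<bar>W z - W z0\<bar> < \<eta>/2" using d1(2)[of z] by (simp add: dist_real_def)
      then have "W z < W z0 + \<eta>/2" by linarith
      ultimately show "\<bar>W z\<bar> < \<eta>" using z0 eta by simp
    qed
  qed
  then show False using Wy by simp
qed

lemma int_mult_ae_bounded:
  fixes f a :: "real \<Rightarrow> real"
  assumes f: "set_integrable lborel {0<..<L} f" and am: "set_borel_measurable lborel {0<..<L} a"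
    and ab: "AE x in lborel. x \<in> {0<..<L} \<longrightarrow> \<bar>a x\<bar> \<le> B"
  shows "set_integrable lborel {0<..<L} (\<lambda>x. a x * f x)"
proof -
  have fi: "integrable lborel (\<lambda>x. indicator {0<..<L} x *\<^sub>R f x)" using f unfolding set_integrable_def .
  have fm: "(\<lambda>x. indicator {0<..<L} x *\<^sub>R f x) \<in> borel_measurable lborel"
    using fi by (rule borel_measurable_integrable)
  have am': "(\<lambda>x. indicator {0<..<L} x *\<^sub>R a x) \<in> borel_measurable lborel"
    using am unfolding set_borel_measurable_def .
  have m: "(\<lambda>x. indicator {0<..<L} x *\<^sub>R (a x * f x)) \<in> borel_measurable lborel"
  proof -
    have "(\<lambda>x. (indicator {0<..<L} x *\<^sub>R a x) * (indicator {0<..<L} x *\<^sub>R f x)) \<in> borel_measurable lborel"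
      using fm am' by measurable
    moreover have "(\<lambda>x. (indicator {0<..<L} x *\<^sub>R a x) * (indicator {0<..<L} x *\<^sub>R f x)) =
        (\<lambda>x. indicator {0<..<L} x *\<^sub>R (a x * f x))"
      by (auto simp: indicator_def fun_eq_iff)
    ultimately show ?thesis by simp
  qed
  have "integrable lborel (\<lambda>x. \<bar>B\<bar> * (indicator {0<..<L} x *\<^sub>R f x))"
    using fi by (rule integrable_mult_right)
  then show ?thesis unfolding set_integrable_def
  proof (rule Bochner_Integration.integrable_bound[OF _ m])
    show "AE x in lborel. norm (indicator {0<..<L} x *\<^sub>R (a x * f x)) \<le> norm (\<bar>B\<bar> * (indicator {0<..<L} x *\<^sub>R f x))"
      using ab
    proof eventually_elim
      case (elim x)
      show ?case
      proof (cases "x \<in> {0<..<L}")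
        case True
        have "\<bar>a x\<bar> * \<bar>f x\<bar> \<le> \<bar>B\<bar> * \<bar>f x\<bar>" by (rule mult_right_mono) (use elim True in auto)
        then show ?thesis using True by (simp add: abs_mult)
      qed simp
    qed
  qed
qed

lemma stepA:
  fixes u v W :: "real \<Rightarrow> real"
  assumes L: "L > 0" and ui: "set_integrable lborel {0<..<L} u"
    and um: "set_borel_measurable lborel {0<..<L} u"
    and vi: "set_integrable lborel {0<..<L} v" and wd: "weak_deriv_on L u v"
    and W: "continuous_on UNIV W" and uW: "AE x in lborel. x \<in> {0<..<L} \<longrightarrow> u x = W x"
    and st: "0 < s" "s < t" "t < L"
  shows "W s - W t = - (LINT z:{0<..<L}|lborel. v z * indicator {s<..<t} z)"
proof -
  define A where "A n = (LINT z:{0<..<L}|lborel. u z * dpsi (real n) s t z)" for n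
  define B where "B n = (LINT z:{0<..<L}|lborel. v z * psi (real n) s t z)" for n
  have ev: "eventually (\<lambda>n. A n = - B n) sequentially"
  proof -
    have "eventually (\<lambda>n. real n * (t - s) \<ge> 3) sequentially" using st by (intro eventually_large) auto
    then show ?thesis
    proof eventually_elim
      case (elim n)
      have np: "real n > 0" using elim st by (smt (verit) mult_nonpos_nonneg of_nat_0_le_iff)
      have "test_fun L (psi (real n) s t)"
        by (rule psi_test) (use st elim np in \<open>auto simp: mult.commute\<close>)
      from wd[unfolded weak_deriv_on_def, rule_format, OF this]
      show ?case unfolding A_def B_def deriv_psi .
    qed
  qed
  have l1: "(\<lambda>n. LINT z:{0<..<L}|lborel. u z * (real n * rho (real n * (z-s) - 1))) \<longlonglongrightarrow> W s"
    using moll_lim[OF W uW um, of s "-1"] st by simp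
  have l2: "(\<lambda>n. LINT z:{0<..<L}|lborel. u z * (real n * rho (real n * (z-t) + 2))) \<longlonglongrightarrow> W t"
    using moll_lim[OF W uW um, of t 2] st by simp
  have Aeq: "A n = (LINT z:{0<..<L}|lborel. u z * (real n * rho (real n * (z-s) - 1)))
             - (LINT z:{0<..<L}|lborel. u z * (real n * rho (real n * (z-t) + 2)))" for n
  proof -
    have i1: "set_integrable lborel {0<..<L} (\<lambda>z. u z * (real n * rho (real n * (z-s) + (-1))))"
      by (rule int_mult_cont[OF ui rho_aff_cont])
    have i2: "set_integrable lborel {0<..<L} (\<lambda>z. u z * (real n * rho (real n * (z-t) + 2)))"
      by (rule int_mult_cont[OF ui rho_aff_cont])
    have "A n = (LINT z:{0<..<L}|lborel. u z * (real n * rho (real n * (z-s) + (-1))) - u z * (real n * rho (real n * (z-t) + 2)))"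
      unfolding A_def dpsi_def by (simp add: algebra_simps)
    also have "\<dots> = (LINT z:{0<..<L}|lborel. u z * (real n * rho (real n * (z-s) + (-1))))
             - (LINT z:{0<..<L}|lborel. u z * (real n * rho (real n * (z-t) + 2)))"
      by (rule set_integral_diff(2)[OF i1 i2])
    finally show ?thesis by simp
  qed
  have "A = (\<lambda>n. (LINT z:{0<..<L}|lborel. u z * (real n * rho (real n * (z-s) - 1)))
             - (LINT z:{0<..<L}|lborel. u z * (real n * rho (real n * (z-t) + 2))))"
    using Aeq by (rule ext)
  then have lA: "A \<longlonglongrightarrow> W s - W t" using tendsto_diff[OF l1 l2] by simp
  have lB: "B \<longlonglongrightarrow> (LINT z:{0<..<L}|lborel. v z * indicator {s<..<t} z)"
    unfolding B_def
    by (rule dct_I[OF vi]) (auto intro: Cn_cont[OF Cn_psi] psi_bound psi_lim st)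
  have "(\<lambda>n. - B n) \<longlonglongrightarrow> - (LINT z:{0<..<L}|lborel. v z * indicator {s<..<t} z)"
    by (rule tendsto_minus[OF lB])
  then have "A \<longlonglongrightarrow> - (LINT z:{0<..<L}|lborel. v z * indicator {s<..<t} z)"
    using tendsto_cong[OF ev] by simp
  then show ?thesis using lA LIMSEQ_unique by blast
qed

lemma stepC:
  fixes F :: "real \<Rightarrow> real"
  assumes L: "L > 0" and Fi: "set_integrable lborel {0<..<L} F"
    and B: "\<And>\<psi>. test_fun L \<psi> \<Longrightarrow> (LINT z:{0<..<L}|lborel. F z * deriv \<psi> z) = 0"
  shows "\<exists>c. AE x in lborel. x \<in> {0<..<L} \<longrightarrow> F x = c"
proof -
  define K0 where "K0 = 4 / L"
  have K0: "K0 > 0" "K0 * L = 4" using L by (auto simp: K0_def)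
  define r0 where "r0 z = K0 * rho (K0 * (z - L/4) + 0)" for z
  have r0c: "continuous_on UNIV r0" unfolding r0_def by (rule rho_aff_cont)
  have r0s: "Cn n r0" for n unfolding r0_def by (intro Cn_cmult Cn_rho_aff)
  have r0int: "(LINT z:{0<..<L}|lborel. r0 z) = 1"
    unfolding r0_def by (rule rho_int_one) (use L K0 in \<open>auto simp: algebra_simps\<close>)
  have r0supp: "z \<in> {L/4..L - L/4}" if "r0 z \<noteq> 0" for z
  proof -
    have "rho (K0 * (z - L/4) + 0) \<noteq> 0" using that by (simp add: r0_def)
    then have "\<not> (K0 * (z - L/4) + 0 \<le> 0 \<or> K0 * (z - L/4) + 0 \<ge> 1)" using rho_zero by blast
    then have "0 < K0 * (z - L/4)" "K0 * (z - L/4) < 1" by auto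
    moreover have "K0 * (L/4) = 1" using K0 by simp
    ultimately have "0 < z - L/4" "K0 * (z - L/4) < K0 * (L/4)" using K0 by (auto simp: zero_less_mult_iff)
    then have "0 < z - L/4" "z - L/4 < L/4" using K0 mult_less_cancel_left_pos by blast+
    then show ?thesis using L by auto
  qed
  define c where "c = (LINT z:{0<..<L}|lborel. F z * r0 z)"
  have zero: "(LINT z:{0<..<L}|lborel. (F z - c) * indicator {s<..<t} z) = 0"
    if st: "0 \<le> s" "s < t" "t \<le> L" for s t
  proof -
    define T where "T n = (LINT z:{0<..<L}|lborel. (F z - c) * psi (real n) s t z)" for n
    have Fci: "set_integrable lborel {0<..<L} (\<lambda>z. F z - c)"
      using Fi int_cont[of "\<lambda>_. c" L] by (intro set_integral_diff(1)) auto
    have lT: "T \<longlonglongrightarrow> (LINT z:{0<..<L}|lborel. (F z - c) * indicator {s<..<t} z)"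
      unfolding T_def
      by (rule dct_I[OF Fci]) (auto intro: Cn_cont[OF Cn_psi] psi_bound psi_lim st)
    have ev: "eventually (\<lambda>n. T n = 0) sequentially"
    proof -
      have "eventually (\<lambda>n. real n * (t - s) \<ge> 3) sequentially" using st by (intro eventually_large) auto
      then show ?thesis
      proof eventually_elim
        case (elim n)
        have np: "real n > 0" using elim st by (smt (verit) mult_nonpos_nonneg of_nat_0_le_iff)
        define th where "th = psi (real n) s t"
        have thc: "continuous_on UNIV th" unfolding th_def by (rule Cn_cont[OF Cn_psi])
        have thsupp: "z \<in> {1/real n..L - 1/real n}" if "th z \<noteq> 0" for z
          using psi_support[OF np _ that[unfolded th_def]] elim st by (auto simp: mult.commute)
        define m where "m = (LINT z:{0<..<L}|lborel. th z)"
        define k where "k z = th z - m * r0 z" for z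
        have kc: "continuous_on UNIV k" unfolding k_def by (intro continuous_intros thc r0c)
        have ks: "smooth_fun k" unfolding smooth_fun_def k_def th_def
          by (intro allI Cn_diff_fun Cn_psi Cn_cmult r0s)
        define dl where "dl = min (1/real n) (L/4)"
        have dl: "dl > 0" using np L by (simp add: dl_def)
        have ksupp: "z \<in> {dl..L-dl}" if "k z \<noteq> 0" for z
        proof (cases "th z = 0")
          case True
          then have "r0 z \<noteq> 0" using that by (auto simp: k_def)
          then show ?thesis using r0supp[of z] by (auto simp: dl_def)
        next
          case False
          then show ?thesis using thsupp[of z] by (auto simp: dl_def)
        qed
        have ith: "set_integrable lborel {0<..<L} th" by (rule int_cont[OF thc])
        have ir0: "set_integrable lborel {0<..<L} (\<lambda>z. m * r0 z)" by (rule int_cont) (intro continuous_intros r0c)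
        have kint: "(LINT z:{0<..<L}|lborel. k z) = 0"
          unfolding k_def using set_integral_diff(2)[OF ith ir0] r0int by (simp add: m_def)
        define chi where "chi = (\<lambda>u. LBINT y=ereal 0..ereal u. k y)"
        have chit: "test_fun L chi" and chid: "deriv chi = k"
          using antideriv_test[OF ks dl ksupp L kint] unfolding chi_def by auto
        have "(LINT z:{0<..<L}|lborel. F z * k z) = 0" using B[OF chit] chid by simp
        moreover have "(LINT z:{0<..<L}|lborel. F z * k z) =
            (LINT z:{0<..<L}|lborel. F z * th z) - m * c"
        proof -
          have i1: "set_integrable lborel {0<..<L} (\<lambda>z. F z * th z)" by (rule int_mult_cont[OF Fi thc])
          have i2: "set_integrable lborel {0<..<L} (\<lambda>z. m * (F z * r0 z))"
            using int_mult_cont[OF Fi r0c] by simp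
          have "(LINT z:{0<..<L}|lborel. F z * k z) = (LINT z:{0<..<L}|lborel. F z * th z - m * (F z * r0 z))"
            unfolding k_def by (simp add: algebra_simps)
          also have "\<dots> = (LINT z:{0<..<L}|lborel. F z * th z) - (LINT z:{0<..<L}|lborel. m * (F z * r0 z))"
            by (rule set_integral_diff(2)[OF i1 i2])
          also have "\<dots> = (LINT z:{0<..<L}|lborel. F z * th z) - m * c"
            by (simp add: c_def)
          finally show ?thesis .
        qed
        ultimately have Fth: "(LINT z:{0<..<L}|lborel. F z * th z) = m * c" by simp
        have i1: "set_integrable lborel {0<..<L} (\<lambda>z. F z * th z)" by (rule int_mult_cont[OF Fi thc])
        have i2: "set_integrable lborel {0<..<L} (\<lambda>z. c * th z)" by (rule int_cont) (intro continuous_intros thc)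
        have "T n = (LINT z:{0<..<L}|lborel. F z * th z - c * th z)"
          unfolding T_def th_def by (simp add: algebra_simps)
        also have "\<dots> = (LINT z:{0<..<L}|lborel. F z * th z) - (LINT z:{0<..<L}|lborel. c * th z)"
          by (rule set_integral_diff(2)[OF i1 i2])
        also have "\<dots> = 0" using Fth by (simp add: m_def)
        finally show ?case .
      qed
    qed
    have "T \<longlonglongrightarrow> 0" using tendsto_cong[OF ev] by simp
    then show ?thesis using lT LIMSEQ_unique by blast
  qed
  have Fci: "set_integrable lborel {0<..<L} (\<lambda>z. F z - c)"
    using Fi int_cont[of "\<lambda>_. c" L] by (intro set_integral_diff(1)) auto
  have "AE x in lborel. x \<in> {0<..<L} \<longrightarrow> F x - c = 0"
    by (rule FL[OF L Fci zero])
  then show ?thesis by (intro exI[of _ c]) auto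
qed

theorem theorem4p1:
  fixes L M :: real and a g u :: "real \<Rightarrow> real" and \<phi> :: "real \<Rightarrow> ereal"
  assumes "L > 0"
    and "H_a L a"
    and "L2_on L g"
    and "H_phi \<phi>"
    and "\<phi> 0 = \<infinity>"
    and "M > 0"
    and "AE x in lborel. x \<in> {0<..<L} \<longrightarrow> g x \<ge> - M"
  shows "\<not> weak_solution L a g \<phi> u"
proof
  assume ws: "weak_solution L a g \<phi> u"
  note L = \<open>L > 0\<close>
  have uL2: "L2_on L u" and H1: "H1_0_on L u" using ws by (auto simp: weak_solution_def H1_0_on_def H1_on_def)
  obtain w where wc: "continuous_on {0..L} w" and w0: "w 0 = 0" and wL: "w L = 0"
    and uw: "AE x in lborel. x \<in> {0<..<L} \<longrightarrow> u x = w x"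
    using H1 unfolding H1_0_on_def by blast
  define p where "p = (\<lambda>x. real_of_ereal (\<phi> (u x)))"
  have pfin: "AE x in lborel. x \<in> {0<..<L} \<longrightarrow> \<phi> (u x) \<noteq> \<infinity>" and pL2: "L2_on L p"
    using ws by (auto simp: weak_solution_def phi_comp_L2_def p_def)
  obtain v where vL2: "L2_on L v" and wd: "weak_deriv_on L u v"
    and eq: "\<And>\<psi>. test_fun L \<psi> \<Longrightarrow>
          (LINT x:{0<..<L}|lborel. a x * v x * deriv \<psi> x) =
          (LINT x:{0<..<L}|lborel. p x * deriv \<psi> x) + (LINT x:{0<..<L}|lborel. g x * deriv \<psi> x)"
    using ws unfolding weak_solution_def p_def by blast
  have am: "set_borel_measurable lborel {0<..<L} a" using \<open>H_a L a\<close> by (simp add: H_a_def)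
  obtain \<alpha> \<beta> where ab: "0 < \<alpha>" "\<alpha> < \<beta>" and abAE: "AE x in lborel. x \<in> {0<..<L} \<longrightarrow> \<alpha> \<le> a x \<and> a x \<le> \<beta>"
    using \<open>H_a L a\<close> unfolding H_a_def by blast
  have phinm: "\<And>s. \<phi> s \<noteq> -\<infinity>" and phic: "continuous_on UNIV \<phi>" using \<open>H_phi \<phi>\<close> by (auto simp: H_phi_def)
  define W where "W x = w (max 0 (min L x))" for x
  have Wc: "continuous_on UNIV W" unfolding W_def
    by (rule continuous_on_compose2[OF wc]) (use L in \<open>auto intro!: continuous_intros\<close>)
  have W0: "W 0 = 0" and WL: "W L = 0" using w0 wL L by (auto simp: W_def)
  have uW: "AE x in lborel. x \<in> {0<..<L} \<longrightarrow> u x = W x"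
    using uw by eventually_elim (auto simp: W_def)
  have ui: "set_integrable lborel {0<..<L} u" by (rule L2_int[OF uL2])
  have um: "set_borel_measurable lborel {0<..<L} u" using uL2 by (simp add: L2_on_def)
  have vi: "set_integrable lborel {0<..<L} v" by (rule L2_int[OF vL2])
  have pi: "set_integrable lborel {0<..<L} p" by (rule L2_int[OF pL2])
  have gi: "set_integrable lborel {0<..<L} g" by (rule L2_int[OF \<open>L2_on L g\<close>])
  have avi: "set_integrable lborel {0<..<L} (\<lambda>x. a x * v x)"
  proof (rule int_mult_ae_bounded[OF vi am, of \<beta>])
    show "AE x in lborel. x \<in> {0<..<L} \<longrightarrow> \<bar>a x\<bar> \<le> \<beta>"
      using abAE by eventually_elim (use ab in auto)
  qed
  define F where "F x = a x * v x - p x - g x" for x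
  have Fi: "set_integrable lborel {0<..<L} F"
    unfolding F_def by (intro set_integral_diff(1) avi pi gi)
  have stepB: "(LINT z:{0<..<L}|lborel. F z * deriv \<psi> z) = 0" if t: "test_fun L \<psi>" for \<psi>
  proof -
    have "Cn (Suc 0) \<psi>" using test_fun_smooth[OF t] unfolding smooth_fun_def by blast
    then have "Cn 0 (deriv \<psi>)" by simp
    then have dc: "continuous_on UNIV (deriv \<psi>)" by (rule Cn_cont)
    have i1: "set_integrable lborel {0<..<L} (\<lambda>z. a z * v z * deriv \<psi> z)" by (rule int_mult_cont[OF avi dc])
    have i2: "set_integrable lborel {0<..<L} (\<lambda>z. p z * deriv \<psi> z)" by (rule int_mult_cont[OF pi dc])
    have i3: "set_integrable lborel {0<..<L} (\<lambda>z. g z * deriv \<psi> z)" by (rule int_mult_cont[OF gi dc])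
    have "(LINT z:{0<..<L}|lborel. F z * deriv \<psi> z) =
        (LINT z:{0<..<L}|lborel. a z * v z * deriv \<psi> z - p z * deriv \<psi> z - g z * deriv \<psi> z)"
      unfolding F_def by (simp add: algebra_simps)
    also have "\<dots> = (LINT z:{0<..<L}|lborel. a z * v z * deriv \<psi> z - p z * deriv \<psi> z) - (LINT z:{0<..<L}|lborel. g z * deriv \<psi> z)"
      by (rule set_integral_diff(2)[OF set_integral_diff(1)[OF i1 i2] i3])
    also have "\<dots> = (LINT z:{0<..<L}|lborel. a z * v z * deriv \<psi> z) - (LINT z:{0<..<L}|lborel. p z * deriv \<psi> z)
        - (LINT z:{0<..<L}|lborel. g z * deriv \<psi> z)"
      by (simp add: set_integral_diff(2)[OF i1 i2])
    also have "\<dots> = 0" using eq[OF t] by simp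
    finally show ?thesis .
  qed
  obtain c where Fc: "AE x in lborel. x \<in> {0<..<L} \<longrightarrow> F x = c"
    using stepC[OF L Fi stepB] by blast
  define K where "K = M + \<bar>c\<bar> + 1"
  have "isCont \<phi> 0" using phic by (simp add: continuous_on_eq_continuous_at)
  then have "(\<phi> \<longlongrightarrow> \<infinity>) (at 0)" using \<open>\<phi> 0 = \<infinity>\<close> by (simp add: isCont_def)
  then have "eventually (\<lambda>s. ereal K < \<phi> s) (at 0)" by (rule order_tendstoD(1)) simp
  then obtain \<eta> where eta: "\<eta> > 0" and etaP: "\<And>s. s \<noteq> 0 \<Longrightarrow> dist s 0 < \<eta> \<Longrightarrow> ereal K < \<phi> s"
    unfolding eventually_at by blast
  have phiK: "ereal K < \<phi> s" if "\<bar>s\<bar> < \<eta>" for s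
    using etaP[of s] that \<open>\<phi> 0 = \<infinity>\<close> by (cases "s = 0") auto
  have mono: "W x \<le> W y" if xy: "0 < x" "x < y" "y < L" and small: "\<forall>z\<in>{x..y}. \<bar>W z\<bar> < \<eta>" for x y
  proof -
    have "W x - W y = - (LINT z:{0<..<L}|lborel. v z * indicator {x<..<y} z)"
      by (rule stepA[OF L ui um vi wd Wc uW xy])
    moreover have "0 \<le> (LINT z:{0<..<L}|lborel. v z * indicator {x<..<y} z)"
      unfolding set_lebesgue_integral_def
    proof (rule integral_nonneg_AE)
      show "AE z in lborel. 0 \<le> indicator {0<..<L} z *\<^sub>R (v z * indicator {x<..<y} z)"
        using uW pfin Fc abAE \<open>AE x in lborel. x \<in> {0<..<L} \<longrightarrow> g x \<ge> - M\<close>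
      proof eventually_elim
        case (elim z)
        show ?case
        proof (cases "z \<in> {0<..<L} \<and> z \<in> {x<..<y}")
          case True
          then have zI: "z \<in> {0<..<L}" and zxy: "z \<in> {x..y}" by auto
          have "\<bar>u z\<bar> < \<eta>" using elim zI small zxy by auto
          then have K1: "ereal K < \<phi> (u z)" by (rule phiK)
          have "\<phi> (u z) \<noteq> \<infinity>" using elim zI by auto
          then have pK: "p z > K" using K1 phinm[of "u z"] unfolding p_def
            by (cases "\<phi> (u z)") auto
          have "a z * v z = c + p z + g z" using elim zI by (simp add: F_def)
          moreover have "g z \<ge> - M" using elim zI by auto
          ultimately have "a z * v z > 0" using pK by (simp add: K_def)
          moreover have "a z > 0" using elim zI ab by force
          ultimately have "v z > 0" by (simp add: zero_less_mult_iff)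
          then show ?thesis using True by simp
        next
          case False
          then show ?thesis by (auto simp: indicator_def)
        qed
      qed
    qed
    ultimately show ?thesis by simp
  qed
  obtain m where m: "0 < m" "m < L" "W m \<noteq> 0"
  proof (rule ccontr)
    assume "\<not> thesis"
    then have W0I: "\<And>m. m \<in> {0<..<L} \<Longrightarrow> W m = 0" using that by auto
    have "AE x in lborel. x \<notin> {0<..<L}"
      using uW pfin
    proof eventually_elim
      case (elim x)
      show ?case
      proof
        assume "x \<in> {0<..<L}"
        then show False using elim W0I[of x] \<open>\<phi> 0 = \<infinity>\<close> by auto
      qed
    qed
    then have "{0<..<L} \<in> null_sets lborel" by (subst AE_iff_null_sets) auto
    then have "emeasure lborel {0<..<L} = 0" by auto
    then show False using L by simp
  qed
  show False
  proof (cases "W m > 0")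
    case True
    show False by (rule no_pos[OF Wc WL eta mono m(1,2) True]) auto
  next
    case False
    then have Wm: "W m < 0" using m by simp
    define W' where "W' x = - W (L - x)" for x
    have W'c: "continuous_on UNIV W'" unfolding W'_def by (intro continuous_intros continuous_on_compose2[OF Wc]) auto
    have W'L: "W' L = 0" using W0 by (simp add: W'_def)
    have mono': "W' x \<le> W' y" if xy: "0 < x" "x < y" "y < L" and small: "\<forall>z\<in>{x..y}. \<bar>W' z\<bar> < \<eta>" for x y
    proof -
      have "W (L - y) \<le> W (L - x)"
      proof (rule mono)
        show "0 < L - y" "L - y < L - x" "L - x < L" using xy by auto
        show "\<forall>z\<in>{L - y..L - x}. \<bar>W z\<bar> < \<eta>"
        proof
          fix z assume "z \<in> {L - y..L - x}"
          then have "L - z \<in> {x..y}" by auto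
          then have "\<bar>W' (L - z)\<bar> < \<eta>" using small by blast
          then show "\<bar>W z\<bar> < \<eta>" by (simp add: W'_def)
        qed
      qed
      then show ?thesis by (simp add: W'_def)
    qed
    show False by (rule no_pos[OF W'c W'L eta mono', of "L - m"]) (use m Wm in \<open>auto simp: W'_def\<close>)
  qed
qed

end
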